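(* Let $T=(V,E,w)$ be a tree with an up-monotonic and rounded cost function, rooted at the vertex $r$ witnessing up-monotonicity, and let $f_{opt}$ be an optimal structured extended strategy function for $T$ (i.e., minimizing $\sup\bigcup_{u}f(u)$ among structured extended strategy functions). Let $L$ be a layer component, and let $L_1,\dots,L_k$ be the layer components directly below $L$, with $v_j=\mathrm{root}(L_j)$. Define $f'$ by $f'(u)=f_{opt}(u)$ if $u$ is a proper descendant of some $v_j$, and $f'(u)=f_{opt}(u)+w(L)$ for all other vertices $u$ (including the $v_j$ and all vertices of $L$). Then $f'$ is a structured extended strategy function for $T$.
   Context: $w$ is up-monotonic with respect to $r$: $w(u)\le w(v)$ whenever $v$ lies on the path from $r$ to $u$; rounded: every $w(u)$ is $2^j$ with $j$ a nonnegative integer. $T_u$ denotes the subtree of $u$ and its descendants. A layer is the set of all vertices of a given cost; a layer component is a connected component of the subgraph induced by a layer; $\mathrm{root}(L)$ is the vertex of $L$ closest to $r$; $w(L)$ is the common cost of its vertices; $L'$ is directly below $L$ if the parent of $\mathrm{root}(L')$ lies in $L$. Intervals are $[a,b)$ with integers $0\le a<b$, $|[a,b)|=b-a$; $[a,b)>[a',b')$ iff $a\ge b'$; $[a,b)+c=[a+c,b+c)$. An extended strategy function for $T$ is a map $f$ assigning to each vertex $u$ an interval $f(u)$ with $|f(u)|\ge w(u)$, such that for any distinct $v_1,v_2$ with $f(v_1)\cap f(v_2)\ne\emptyset$, the path between $v_1$ and $v_2$ contains a vertex $v_3$ with $f(v_3)>f(v_1)$ and $f(v_3)>f(v_2)$.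 It is structured if for every layer component $L$, with $u=\mathrm{root}(L)$, $f(u)>f(x)$ for every $x\in V(T_u)\setminus\{u\}$. *)

theory Defs
  imports Main
begin

definition is_path :: "('a \<times> 'a) set \<Rightarrow> 'a list \<Rightarrow> bool" where
  "is_path E xs \<longleftrightarrow> xs \<noteq> [] \<and> distinct xs \<and>
     (\<forall>i. Suc i < length xs \<longrightarrow> (xs ! i, xs ! Suc i) \<in> E)"

definition path_betw :: "('a \<times> 'a) set \<Rightarrow> 'a \<Rightarrow> 'a \<Rightarrow> 'a list \<Rightarrow> bool" where
  "path_betw E u v xs \<longleftrightarrow> is_path E xs \<and> hd xs = u \<and> last xs = v"

definition is_tree :: "'a set \<Rightarrow> ('a \<times> 'a) set \<Rightarrow> bool" where
  "is_tree V E \<longleftrightarrow> finite V \<and> V \<noteq> {} \<and> E \<subseteq> V \<times> V \<and> sym E \<and> irrefl E \<and>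
     (\<forall>u\<in>V. \<forall>v\<in>V. \<exists>xs. path_betw E u v xs) \<and>
     \<not> (\<exists>xs. is_path E xs \<and> 3 \<le> length xs \<and> (last xs, hd xs) \<in> E)"

text \<open>x lies on the (unique, in a tree) path between u and v.\<close>
definition on_path :: "('a \<times> 'a) set \<Rightarrow> 'a \<Rightarrow> 'a \<Rightarrow> 'a \<Rightarrow> bool" where
  "on_path E u v x \<longleftrightarrow> (\<exists>xs. path_betw E u v xs \<and> x \<in> set xs)"

definition dist :: "('a \<times> 'a) set \<Rightarrow> 'a \<Rightarrow> 'a \<Rightarrow> nat" where
  "dist E u v = (LEAST n. \<exists>xs. path_betw E u v xs \<and> length xs = Suc n)"

definition subtree :: "'a set \<Rightarrow> ('a \<times> 'a) set \<Rightarrow> 'a \<Rightarrow> 'a \<Rightarrow> 'a set" where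
  "subtree V E r u = {x \<in> V. on_path E r x u}"

definition is_parent :: "('a \<times> 'a) set \<Rightarrow> 'a \<Rightarrow> 'a \<Rightarrow> 'a \<Rightarrow> bool" where
  "is_parent E r p x \<longleftrightarrow> x \<noteq> r \<and> (p, x) \<in> E \<and> on_path E r x p"

definition up_monotonic :: "'a set \<Rightarrow> ('a \<times> 'a) set \<Rightarrow> 'a \<Rightarrow> ('a \<Rightarrow> nat) \<Rightarrow> bool" where
  "up_monotonic V E r w \<longleftrightarrow> (\<forall>u\<in>V. \<forall>v\<in>V. on_path E r u v \<longrightarrow> w u \<le> w v)"

definition rounded :: "'a set \<Rightarrow> ('a \<Rightarrow> nat) \<Rightarrow> bool" where
  "rounded V w \<longleftrightarrow> (\<forall>u\<in>V. \<exists>j::nat. w u = 2 ^ j)"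

definition layer_comp :: "'a set \<Rightarrow> ('a \<times> 'a) set \<Rightarrow> ('a \<Rightarrow> nat) \<Rightarrow> 'a set \<Rightarrow> bool" where
  "layer_comp V E w L \<longleftrightarrow> L \<noteq> {} \<and> L \<subseteq> V \<and> (\<exists>c. \<forall>x\<in>L. w x = c) \<and>
     (\<forall>x\<in>L. \<forall>y\<in>L. \<exists>xs. path_betw E x y xs \<and> set xs \<subseteq> L) \<and>
     (\<forall>x\<in>L. \<forall>y\<in>V. (x, y) \<in> E \<and> w y = w x \<longrightarrow> y \<in> L)"

definition is_root :: "('a \<times> 'a) set \<Rightarrow> 'a \<Rightarrow> 'a set \<Rightarrow> 'a \<Rightarrow> bool" where
  "is_root E r L x \<longleftrightarrow> x \<in> L \<and> (\<forall>y\<in>L. dist E r x \<le> dist E r y)"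

definition layer_cost :: "('a \<Rightarrow> nat) \<Rightarrow> 'a set \<Rightarrow> nat" where
  "layer_cost w L = w (SOME x. x \<in> L)"

definition directly_below :: "('a \<times> 'a) set \<Rightarrow> 'a \<Rightarrow> 'a set \<Rightarrow> 'a set \<Rightarrow> bool" where
  "directly_below E r L' L \<longleftrightarrow> (\<exists>x p. is_root E r L' x \<and> is_parent E r p x \<and> p \<in> L)"

section \<open>Intervals [a,b) as pairs (a,b)\<close>

definition ilen :: "nat \<times> nat \<Rightarrow> nat" where
  "ilen I = snd I - fst I"

definition iinter :: "nat \<times> nat \<Rightarrow> nat \<times> nat \<Rightarrow> bool" where
  "iinter I J \<longleftrightarrow> max (fst I) (fst J) < min (snd I) (snd J)"

definition igreater :: "nat \<times> nat \<Rightarrow> nat \<times> nat \<Rightarrow> bool" where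
  "igreater I J \<longleftrightarrow> snd J \<le> fst I"

definition ishift :: "nat \<times> nat \<Rightarrow> nat \<Rightarrow> nat \<times> nat" where
  "ishift I c = (fst I + c, snd I + c)"

definition ext_strategy :: "'a set \<Rightarrow> ('a \<times> 'a) set \<Rightarrow> ('a \<Rightarrow> nat) \<Rightarrow> ('a \<Rightarrow> nat \<times> nat) \<Rightarrow> bool" where
  "ext_strategy V E w f \<longleftrightarrow>
     (\<forall>u\<in>V. fst (f u) < snd (f u) \<and> w u \<le> ilen (f u)) \<and>
     (\<forall>v1\<in>V. \<forall>v2\<in>V. v1 \<noteq> v2 \<and> iinter (f v1) (f v2) \<longrightarrow>
        (\<exists>v3. on_path E v1 v2 v3 \<and> igreater (f v3) (f v1) \<and> igreater (f v3) (f v2)))"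

definition structured_ext :: "'a set \<Rightarrow> ('a \<times> 'a) set \<Rightarrow> 'a \<Rightarrow> ('a \<Rightarrow> nat) \<Rightarrow> ('a \<Rightarrow> nat \<times> nat) \<Rightarrow> bool" where
  "structured_ext V E r w f \<longleftrightarrow> ext_strategy V E w f \<and>
     (\<forall>L u. layer_comp V E w L \<and> is_root E r L u \<longrightarrow>
        (\<forall>x \<in> subtree V E r u - {u}. igreater (f u) (f x)))"

text \<open>sup of the union of all intervals f(u) = [a_u,b_u): the maximal right endpoint.\<close>
definition span :: "'a set \<Rightarrow> ('a \<Rightarrow> nat \<times> nat) \<Rightarrow> nat" where
  "span V f = Max ((\<lambda>u. snd (f u)) ` V)"

definition optimal_structured :: "'a set \<Rightarrow> ('a \<times> 'a) set \<Rightarrow> 'a \<Rightarrow> ('a \<Rightarrow> nat) \<Rightarrow> ('a \<Rightarrow> nat \<times> nat) \<Rightarrow> bool" where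
  "optimal_structured V E r w f \<longleftrightarrow> structured_ext V E r w f \<and>
     (\<forall>g. structured_ext V E r w g \<longrightarrow> span V f \<le> span V g)"

end

theory Submission imports Defs begin

abbreviation SE :: "('a \<times> 'a) set \<Rightarrow> 'a list \<Rightarrow> bool" where
  "SE E \<equiv> successively (\<lambda>x y. (x,y) \<in> E)"

lemma is_path_succ: "is_path E xs \<longleftrightarrow> xs \<noteq> [] \<and> distinct xs \<and> SE E xs"
  by (simp add: is_path_def successively_conv_nth)

lemma SE_rev: assumes "sym E" shows "SE E (rev l) = SE E l"
proof -
  have "successively (\<lambda>x y. (y,x)\<in>E) l = SE E l"
  proof
    assume "successively (\<lambda>x y. (y,x)\<in>E) l" then show "SE E l"
      by (rule successively_mono) (use assms in \<open>blast dest: symD\<close>)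
  next
    assume "SE E l" then show "successively (\<lambda>x y. (y,x)\<in>E) l"
      by (rule successively_mono) (use assms in \<open>blast dest: symD\<close>)
  qed
  then show ?thesis by (subst successively_rev)
qed

lemma path_unique:
  assumes sy: "sym E" and nocyc: "\<not>(\<exists>xs. is_path E xs \<and> 3 \<le> length xs \<and> (last xs, hd xs) \<in> E)"
  shows "is_path E xs \<Longrightarrow> is_path E ys \<Longrightarrow> hd xs = hd ys \<Longrightarrow> last xs = last ys \<Longrightarrow> xs = ys"
proof (induction xs arbitrary: ys)
  case Nil
  then show ?case by (simp add: is_path_def)
next
  case (Cons a xs')
  from Cons.prems obtain ys' where ys: "ys = a # ys'" by (cases ys) (auto simp: is_path_def)
  show ?case
  proof (cases xs')
    case Nil
    then have la: "last ys = a" using Cons.prems(4) by simp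
    have "ys' = []"
    proof (rule ccontr)
      assume "ys' \<noteq> []"
      then have "last ys' = a" using la ys by simp
      then have "a \<in> set ys'" using \<open>ys' \<noteq> []\<close> by (metis last_in_set)
      then show False using Cons.prems(2) ys unfolding is_path_succ by simp
    qed
    then show ?thesis using ys \<open>xs' = []\<close> by simp
  next
    case (Cons x xs'')
    note xs' = this
    have "ys' \<noteq> []"
    proof
      assume "ys' = []"
      then have "last (a # xs') = a" using Cons.prems ys by simp
      then show False using Cons.prems(1) xs' by (simp add: is_path_def) (metis last_in_set list.distinct(1))
    qed
    then obtain y ys'' where ys': "ys' = y # ys''" by (cases ys') auto
    show ?thesis
    proof (cases "x = y")
      case True
      have "xs' = ys'"
        apply (rule Cons.IH)
        using Cons.prems ys xs' ys' True by (auto simp: is_path_succ)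
      then show ?thesis using ys by simp
    next
      case False
      define s where "s = x # xs''"
      define t where "t = y # ys''"
      have pS: "SE E (a # s)" "distinct (a # s)" using Cons.prems(1) xs' s_def by (auto simp: is_path_succ)
      have pT: "SE E (a # t)" "distinct (a # t)" using Cons.prems(2) ys ys' t_def by (auto simp: is_path_succ)
      have "last t = last s" using Cons.prems(4) ys ys' xs' s_def t_def by simp
      then have "\<exists>m\<in>set t. m \<in> set s" using s_def t_def by (metis last_in_set list.distinct(1))
      then obtain t1 m t2 where tsp: "t = t1 @ m # t2" "m \<in> set s" "\<forall>z\<in>set t1. z \<notin> set s"
        using split_list_first_prop[of t "\<lambda>z. z \<in> set s"] by blast
      then obtain s1 s2 where ssp: "s = s1 @ m # s2" by (meson split_list)
      define C where "C = (a # s1) @ rev (t1 @ [m])"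
      have "a # s = (a # s1 @ [m]) @ s2" by (simp add: ssp)
      then have "SE E ((a # s1 @ [m]) @ s2)" using pS(1) by simp
      then have e1: "SE E (a # s1 @ [m])" unfolding successively_append_iff by blast
      have "a # t = (a # t1 @ [m]) @ t2" by (simp add: tsp)
      then have "SE E ((a # t1 @ [m]) @ t2)" using pT(1) by simp
      then have e2: "SE E (a # t1 @ [m])" unfolding successively_append_iff by blast
      have "SE E (t1 @ [m])" using e2 by (simp add: successively_Cons)
      then have e3: "SE E (rev (t1 @ [m]))" using SE_rev[OF sy] by blast
      have "SE E ((a # s1) @ [m])" using e1 by simp
      then have e4: "SE E (a # s1)" "(last (a # s1), m) \<in> E" unfolding successively_append_iff by auto
      have "SE E C" unfolding C_def successively_append_iff using e3 e4 by simp
      moreover have "distinct C"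
      proof -
        have d1: "distinct (a # s1)" "m \<notin> set s1" "a \<noteq> m" using pS ssp by auto
        have d2: "distinct (t1 @ [m])" "a \<notin> set t1" using pT tsp by auto
        have d3: "set s1 \<inter> set t1 = {}" using tsp(3) ssp by auto
        show ?thesis unfolding C_def using d1 d2 d3 by auto
      qed
      moreover have "3 \<le> length C"
      proof (cases "t1 = []")
        case True
        then have "m = y" using tsp t_def by simp
        then have "s1 \<noteq> []" using ssp s_def False by auto
        then show ?thesis unfolding C_def by (cases s1) auto
      next
        case False
        then show ?thesis unfolding C_def by (cases t1) auto
      qed
      moreover have "(last C, hd C) \<in> E"
      proof -
        have "last C = y" unfolding C_def using tsp t_def by (cases t1) auto
        moreover have "(a, y) \<in> E" using pT t_def by simp
        ultimately show ?thesis unfolding C_def using sy by (auto simp: sym_def)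
      qed
      ultimately show ?thesis using nocyc by (auto simp: is_path_succ)
    qed
  qed
qed


locale tctx =
  fixes V :: "'a set" and E :: "('a \<times> 'a) set" and r :: 'a
  assumes tree: "is_tree V E" and rV: "r \<in> V"
begin

lemma sy: "sym E" and irr: "irrefl E" and EV: "E \<subseteq> V \<times> V"
  and nocyc: "\<not>(\<exists>xs. is_path E xs \<and> 3 \<le> length xs \<and> (last xs, hd xs) \<in> E)"
  and conn: "\<And>u v. u \<in> V \<Longrightarrow> v \<in> V \<Longrightarrow> \<exists>xs. path_betw E u v xs"
  using tree unfolding is_tree_def by auto

lemma uniq: "path_betw E u v xs \<Longrightarrow> path_betw E u v ys \<Longrightarrow> xs = ys"
  unfolding path_betw_def using path_unique[OF sy nocyc] by metis

lemma path_in_V: assumes "is_path E q" "hd q \<in> V" shows "set q \<subseteq> V"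
proof
  fix z assume "z \<in> set q"
  then obtain k where k: "k < length q" "z = q ! k" by (metis in_set_conv_nth)
  show "z \<in> V"
  proof (cases k)
    case 0
    then show ?thesis using k assms by (simp add: hd_conv_nth is_path_def)
  next
    case (Suc i)
    then have "(q ! i, q ! Suc i) \<in> E" using assms(1) k by (simp add: is_path_def)
    then show ?thesis using EV k Suc by auto
  qed
qed

definition P :: "'a \<Rightarrow> 'a list" where "P x = (THE xs. path_betw E r x xs)"

lemma P_path: assumes "x \<in> V" shows "path_betw E r x (P x)"
proof -
  obtain xs where "path_betw E r x xs" using conn[OF rV assms] by blast
  then have "(THE ys. path_betw E r x ys) = xs" by (rule the_equality) (use uniq \<open>path_betw E r x xs\<close> in blast)+
  then show ?thesis unfolding P_def using \<open>path_betw E r x xs\<close> by simp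
qed

lemma P_eq: assumes "path_betw E r x xs" "x \<in> V" shows "P x = xs"
  using uniq[OF P_path[OF assms(2)] assms(1)] .

lemma P_ne: "x \<in> V \<Longrightarrow> P x \<noteq> []" and P_last: "x \<in> V \<Longrightarrow> last (P x) = x"
  and P_hd: "x \<in> V \<Longrightarrow> hd (P x) = r" and P_is: "x \<in> V \<Longrightarrow> is_path E (P x)"
  using P_path unfolding path_betw_def is_path_def by auto

lemma P_V: "x \<in> V \<Longrightarrow> set (P x) \<subseteq> V"
  using path_in_V P_is P_hd rV by metis

lemma on_path_root: "x \<in> V \<Longrightarrow> on_path E r x u \<longleftrightarrow> u \<in> set (P x)"
  unfolding on_path_def using P_path P_eq by metis

lemma subtree_iff: "x \<in> subtree V E r u \<longleftrightarrow> x \<in> V \<and> u \<in> set (P x)"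
  unfolding subtree_def using on_path_root by auto

lemma prefix: assumes "x \<in> V" "v \<in> set (P x)" shows "\<exists>s. P x = P v @ s"
proof -
  obtain p1 p2 where sp: "P x = p1 @ v # p2" using assms(2) by (meson split_list)
  have vV: "v \<in> V" using P_V[OF assms(1)] assms(2) by auto
  have ip: "is_path E (P x)" using P_is[OF assms(1)] .
  have "P x = (p1 @ [v]) @ p2" using sp by simp
  then have "SE E ((p1 @ [v]) @ p2)" "distinct ((p1 @ [v]) @ p2)" using ip unfolding is_path_succ by metis+
  then have "SE E (p1 @ [v])" "distinct (p1 @ [v])" unfolding successively_append_iff by auto
  then have ipp: "is_path E (p1 @ [v])" unfolding is_path_succ by simp
  have "hd (p1 @ [v]) = r"
    using P_hd[OF assms(1)] sp by (cases p1) auto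
  then have "path_betw E r v (p1 @ [v])" using ipp unfolding path_betw_def by simp
  then have "P v = p1 @ [v]" using P_eq vV by blast
  then show ?thesis using sp by auto
qed

lemma neighbor: assumes "z \<in> V" "z' \<in> V" "(z, z') \<in> E"
  shows "P z' = P z @ [z'] \<or> P z = P z' @ [z]"
proof (cases "z' \<in> set (P z)")
  case False
  have "is_path E (P z @ [z'])"
    using P_is[OF assms(1)] False P_last[OF assms(1)] P_ne[OF assms(1)] assms(3)
    unfolding is_path_succ successively_append_iff by auto
  moreover have "hd (P z @ [z']) = r" using P_hd[OF assms(1)] P_ne[OF assms(1)] by simp
  ultimately have "path_betw E r z' (P z @ [z'])" unfolding path_betw_def by simp
  then show ?thesis using P_eq assms(2) by blast
next
  case True
  then obtain s where s: "P z = P z' @ s" using prefix assms(1) by blast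
  have zz: "z \<noteq> z'" using irr assms(3) by (auto simp: irrefl_def)
  have "s \<noteq> []"
  proof
    assume "s = []" then have "P z = P z'" using s by simp
    then show False using P_last[OF assms(1)] P_last[OF assms(2)] zz by metis
  qed
  then have ls: "last s = z" using s P_last[OF assms(1)] by simp
  show ?thesis
  proof (cases "s = [z]")
    case True then show ?thesis using s by simp
  next
    case False
    obtain s' where s': "s = s' @ [z]" using \<open>s \<noteq> []\<close> ls by (metis append_butlast_last_id)
    have "s' \<noteq> []" using False s' by auto
    define Q where "Q = z' # s' @ [z]"
    have bz: "P z' = butlast (P z') @ [z']" using P_ne[OF assms(2)] P_last[OF assms(2)]
      by (metis append_butlast_last_id)
    have "P z = butlast (P z') @ Q" unfolding Q_def using s s' bz by (metis append.assoc append_Cons append_Nil)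
    then have "SE E (butlast (P z') @ Q)" "distinct (butlast (P z') @ Q)"
      using P_is[OF assms(1)] unfolding is_path_succ by metis+
    then have "is_path E Q" unfolding is_path_succ successively_append_iff Q_def by auto
    moreover have "3 \<le> length Q" unfolding Q_def using \<open>s' \<noteq> []\<close> by (cases s') auto
    moreover have "(last Q, hd Q) \<in> E" unfolding Q_def using assms(3) by simp
    ultimately show ?thesis using nocyc by blast
  qed
qed

lemma sep: assumes "v \<in> V" "is_path E q" "hd q \<in> subtree V E r v - {v}"
  "last q \<notin> subtree V E r v - {v}" shows "v \<in> set q"
  using assms(2-4)
proof (induction q)
  case Nil then show ?case by (simp add: is_path_def)
next
  case (Cons x q')
  show ?case
  proof (cases q')
    case Nil then show ?thesis using Cons.prems by simp
  next
    case (Cons y q'')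
    have E1: "(x, y) \<in> E" using Cons.prems(1) Cons unfolding is_path_succ by simp
    have xV: "x \<in> V" using Cons.prems(2) by (simp add: subtree_def)
    have yV: "y \<in> V" using E1 EV by auto
    show ?thesis
    proof (cases "y = v")
      case True then show ?thesis using Cons by simp
    next
      case False
      have vx: "v \<in> set (P x)" "x \<noteq> v" using Cons.prems(2) subtree_iff by auto
      have "v \<in> set (P y)" using neighbor[OF xV yV E1] vx by auto
      then have "y \<in> subtree V E r v - {v}" using subtree_iff yV False by auto
      moreover have "is_path E q'" using Cons.prems(1) Cons unfolding is_path_succ by simp
      ultimately have "v \<in> set q'" using Cons.IH Cons.prems(3) Cons by simp
      then show ?thesis by simp
    qed
  qed
qed

lemma core1: assumes "z \<in> subtree V E r v - {v}" "x \<in> subtree V E r z"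
  shows "x \<in> subtree V E r v - {v}"
proof -
  have zV: "z \<in> V" and xV: "x \<in> V" using assms subtree_iff by auto
  have "v \<in> set (P z)" "z \<in> set (P x)" "z \<noteq> v" using assms subtree_iff by auto
  then obtain s t where s: "P x = P z @ s" and t: "P z = P v @ t"
    using prefix zV xV by metis
  have vx: "v \<in> set (P x)" using s \<open>v \<in> set (P z)\<close> by simp
  have "x \<noteq> v"
  proof
    assume "x = v"
    then have "t = []" using s t by simp
    then have "P z = P v" using t by simp
    then show False using P_last zV \<open>x = v\<close> xV \<open>z \<noteq> v\<close> by metis
  qed
  then show ?thesis using vx xV subtree_iff by auto
qed

lemma depth: assumes "b \<in> subtree V E r a - {a}" shows "length (P a) < length (P b)"
proof -
  have bV: "b \<in> V" "a \<in> set (P b)" "b \<noteq> a" using assms subtree_iff by auto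
  then obtain s where s: "P b = P a @ s" using prefix by blast
  have aV: "a \<in> V" using P_V bV by auto
  have "s \<noteq> []"
  proof
    assume "s = []" then have "P b = P a" using s by simp
    then show False using P_last[OF aV] P_last[OF bV(1)] bV(3) by metis
  qed
  then show ?thesis using s by simp
qed

end


lemma ig_shift_both: "igreater (ishift I c) (ishift J c) = igreater I J"
  by (simp add: igreater_def ishift_def)
lemma ig_shift_left: "igreater I J \<Longrightarrow> igreater (ishift I c) J"
  by (simp add: igreater_def ishift_def)
lemma ig_trans: "igreater I J \<Longrightarrow> fst J < snd J \<Longrightarrow> igreater J K \<Longrightarrow> igreater I K"
  by (simp add: igreater_def)
lemma iinter_shift: "iinter (ishift I c) (ishift J c) = iinter I J"
  by (auto simp add: iinter_def ishift_def)

lemma path_suffix: "is_path E (q1 @ x # q2) \<Longrightarrow> is_path E (x # q2)"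
  unfolding is_path_succ successively_append_iff by auto
lemma path_prefix: "is_path E (q1 @ x # q2) \<Longrightarrow> is_path E (q1 @ [x])"
proof -
  assume "is_path E (q1 @ x # q2)"
  then have "is_path E ((q1 @ [x]) @ q2)" by simp
  then show ?thesis unfolding is_path_succ successively_append_iff by auto
qed
lemma path_rev: "sym E \<Longrightarrow> is_path E q \<Longrightarrow> is_path E (rev q)"
  unfolding is_path_succ using SE_rev by auto

lemma on_path_sym: "sym E \<Longrightarrow> on_path E a b v \<Longrightarrow> on_path E b a v"
  unfolding on_path_def path_betw_def
  by (metis path_rev hd_rev last_rev set_rev)

theorem mainTheorem18:
  fixes V :: "'a set" and E :: "('a \<times> 'a) set" and r :: 'a and w :: "'a \<Rightarrow> nat"
    and fopt :: "'a \<Rightarrow> nat \<times> nat" and L :: "'a set"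
  assumes "is_tree V E" and "r \<in> V"
    and "up_monotonic V E r w" and "rounded V w"
    and "optimal_structured V E r w fopt"
    and "layer_comp V E w L"
  shows "structured_ext V E r w
           (\<lambda>u. if (\<exists>L' v. layer_comp V E w L' \<and> directly_below E r L' L \<and> is_root E r L' v
                          \<and> u \<in> subtree V E r v - {v})
                then fopt u else ishift (fopt u) (layer_cost w L))"
proof -
  interpret T: tctx V E r using assms(1,2) by unfold_locales
  define c where "c = layer_cost w L"
  define R where "R = {v. \<exists>L'. layer_comp V E w L' \<and> directly_below E r L' L \<and> is_root E r L' v}"
  define D where "D = {u. \<exists>v\<in>R. u \<in> subtree V E r v - {v}}"
  define g where "g u = (if u \<in> D then fopt u else ishift (fopt u) c)" for u
  have lam: "(\<lambda>u. if (\<exists>L' v. layer_comp V E w L' \<and> directly_below E r L' L \<and> is_root E r L' v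
                          \<and> u \<in> subtree V E r v - {v})
                then fopt u else ishift (fopt u) (layer_cost w L)) = g"
    by (rule ext) (auto simp: g_def D_def R_def c_def)
  have ES: "ext_strategy V E w fopt" and
    STR: "\<And>L u x. layer_comp V E w L \<Longrightarrow> is_root E r L u \<Longrightarrow> x \<in> subtree V E r u - {u}
           \<Longrightarrow> igreater (fopt u) (fopt x)"
    using assms(5) unfolding optimal_structured_def structured_ext_def by blast+
  have ne: "\<And>u. u \<in> V \<Longrightarrow> fst (fopt u) < snd (fopt u)" using ES unfolding ext_strategy_def by blast
  have ES2: "\<And>v1 v2. v1 \<in> V \<Longrightarrow> v2 \<in> V \<Longrightarrow> v1 \<noteq> v2 \<Longrightarrow> iinter (fopt v1) (fopt v2) \<Longrightarrow>
        \<exists>v3. on_path E v1 v2 v3 \<and> igreater (fopt v3) (fopt v1) \<and> igreater (fopt v3) (fopt v2)"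
    using ES unfolding ext_strategy_def by blast
  have F1: "v \<in> V \<and> (\<forall>x \<in> subtree V E r v - {v}. igreater (fopt v) (fopt x))" if vR: "v \<in> R" for v
  proof -
    obtain L' where L': "layer_comp V E w L'" "is_root E r L' v" using vR R_def by blast
    then have "v \<in> V" unfolding layer_comp_def is_root_def by blast
    then show ?thesis using STR L' by blast
  qed
  have subV: "x \<in> V" if "x \<in> subtree V E r v" for x v using that unfolding subtree_def by auto
  have F2: "x \<in> D" if "u \<in> D" "x \<in> subtree V E r u" for u x
    using that T.core1 unfolding D_def by blast
  have F3: "\<exists>v\<in>R. u \<in> subtree V E r v - {v} \<and> v \<notin> D" if uD: "u \<in> D" for u
  proof -
    define S where "S = {v \<in> R. u \<in> subtree V E r v - {v}}"
    obtain v0 where "v0 \<in> S" using uD unfolding D_def S_def by blast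
    then obtain v where v: "v \<in> S" and vmin: "\<And>y. y \<in> S \<Longrightarrow> length (T.P v) \<le> length (T.P y)"
      using ex_has_least_nat[of "\<lambda>v. v \<in> S" v0 "\<lambda>v. length (T.P v)"] by blast
    have "v \<notin> D"
    proof
      assume "v \<in> D"
      then obtain v'' where v'': "v'' \<in> R" "v \<in> subtree V E r v'' - {v''}" unfolding D_def by blast
      have "u \<in> subtree V E r v" using v S_def by blast
      then have "u \<in> subtree V E r v'' - {v''}" using T.core1 v'' by blast
      then have "v'' \<in> S" using v'' S_def by blast
      moreover have "length (T.P v'') < length (T.P v)" using T.depth v'' by blast
      ultimately show False using vmin by fastforce
    qed
    then show ?thesis using v S_def by blast
  qed
  have DV: "D \<subseteq> V" unfolding D_def using subV by blast
  have mixed: "\<exists>v3. on_path E a b v3 \<and> igreater (g v3) (g a) \<and> igreater (g v3) (g b)"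
    if ab: "a \<in> D" "b \<in> V" "b \<notin> D" "iinter (g a) (g b)" for a b
  proof -
    have aV: "a \<in> V" using ab DV by blast
    obtain v where v: "v \<in> R" "a \<in> subtree V E r v - {v}" "v \<notin> D" using F3 ab by blast
    have vV: "v \<in> V" and va: "igreater (fopt v) (fopt a)" using F1 v by auto
    have bnot: "b \<notin> subtree V E r v - {v}" using ab v D_def by blast
    have ga: "g a = fopt a" and gb: "g b = ishift (fopt b) c" and gv: "g v = ishift (fopt v) c"
      using ab v g_def by auto
    have ia: "iinter (fopt a) (ishift (fopt b) c)" using ab ga gb by simp
    consider (al) "snd (fopt b) \<le> fst (fopt a)" | (be) "snd (fopt a) \<le> fst (fopt b)"
      | (inter) "iinter (fopt a) (fopt b)"
      using ne[OF aV] ne[OF ab(2)] unfolding iinter_def by linarith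
    then show ?thesis
    proof cases
      case al
      obtain q where q: "path_betw E a b q" using T.conn aV ab(2) by blast
      have qq: "is_path E q" "hd q = a" "last q = b" using q unfolding path_betw_def by auto
      have "v \<in> set q" using T.sep[OF vV qq(1)] qq v(2) bnot by simp
      then have op: "on_path E a b v" unfolding on_path_def using q by blast
      have "igreater (fopt v) (fopt b)" using al va ne[OF aV] unfolding igreater_def by linarith
      then have "igreater (g v) (g b)" by (simp add: gv gb ig_shift_both)
      moreover have "igreater (g v) (g a)" by (simp add: gv ga ig_shift_left va)
      ultimately show ?thesis using op by blast
    next
      case be
      then show ?thesis using ia unfolding iinter_def ishift_def by auto
    next
      case inter
      obtain v3 where v3: "on_path E a b v3" "igreater (fopt v3) (fopt a)" "igreater (fopt v3) (fopt b)"
        using ES2[OF aV ab(2) _ inter] ab by blast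
      show ?thesis
      proof (cases "v3 \<in> D")
        case False
        then have g3: "g v3 = ishift (fopt v3) c" using g_def by simp
        have "igreater (g v3) (g b)" by (simp add: g3 gb ig_shift_both v3)
        moreover have "igreater (g v3) (g a)" by (simp add: g3 ga ig_shift_left v3)
        ultimately show ?thesis using v3 by blast
      next
        case True
        obtain v' where v': "v' \<in> R" "v3 \<in> subtree V E r v' - {v'}" "v' \<notin> D" using F3 True by blast
        have v'V: "v' \<in> V" and v'3: "igreater (fopt v') (fopt v3)" using F1 v' by auto
        have v3V: "v3 \<in> V" using True DV by blast
        obtain q where q: "path_betw E a b q" "v3 \<in> set q" using v3 unfolding on_path_def by blast
        obtain q1 q2 where qs: "q = q1 @ v3 # q2" using q(2) by (meson split_list)
        have pq: "is_path E (v3 # q2)" using q qs path_suffix[of E q1 v3 q2] unfolding path_betw_def by simp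
        have "last (v3 # q2) = b" using q qs unfolding path_betw_def by simp
        moreover have "b \<notin> subtree V E r v' - {v'}" using ab v' D_def by blast
        ultimately have "v' \<in> set (v3 # q2)" using T.sep[OF v'V pq] v' by simp
        then have "v' \<in> set q" using qs by auto
        then have op: "on_path E a b v'" unfolding on_path_def using q by blast
        have gv': "g v' = ishift (fopt v') c" using v' g_def by simp
        have "igreater (fopt v') (fopt a)" "igreater (fopt v') (fopt b)"
          using ig_trans[OF v'3 ne[OF v3V]] v3 by auto
        then have "igreater (g v') (g b)" "igreater (g v') (g a)"
          by (simp_all add: gv' gb ga ig_shift_both ig_shift_left)
        then show ?thesis using op by blast
      qed
    qed
  qed
  have part1: "\<forall>u\<in>V. fst (g u) < snd (g u) \<and> w u \<le> ilen (g u)"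
    using ES unfolding ext_strategy_def g_def ishift_def ilen_def by auto
  have part2: "\<exists>v3. on_path E v1 v2 v3 \<and> igreater (g v3) (g v1) \<and> igreater (g v3) (g v2)"
    if vv: "v1 \<in> V" "v2 \<in> V" "v1 \<noteq> v2" "iinter (g v1) (g v2)" for v1 v2
  proof (cases "v1 \<in> D")
    case True
    show ?thesis
    proof (cases "v2 \<in> D")
      case True
      then have "iinter (fopt v1) (fopt v2)" using \<open>v1 \<in> D\<close> vv g_def by simp
      then obtain v3 where v3: "on_path E v1 v2 v3" "igreater (fopt v3) (fopt v1)" "igreater (fopt v3) (fopt v2)"
        using ES2 vv by blast
      have "igreater (g v3) (g v1) \<and> igreater (g v3) (g v2)"
        using v3 True \<open>v1 \<in> D\<close> g_def ig_shift_left by (cases "v3 \<in> D") auto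
      then show ?thesis using v3 by blast
    next
      case False
      then show ?thesis using mixed vv True by blast
    qed
  next
    case False
    show ?thesis
    proof (cases "v2 \<in> D")
      case True
      have "iinter (g v2) (g v1)" using vv(4) unfolding iinter_def by linarith
      then obtain v3 where "on_path E v2 v1 v3" "igreater (g v3) (g v2)" "igreater (g v3) (g v1)"
        using mixed vv True False by blast
      then show ?thesis using on_path_sym[OF T.sy] by blast
    next
      case F2: False
      then have "iinter (fopt v1) (fopt v2)" using False vv g_def iinter_shift by simp
      then obtain v3 where v3: "on_path E v1 v2 v3" "igreater (fopt v3) (fopt v1)" "igreater (fopt v3) (fopt v2)"
        using ES2 vv by blast
      have "v3 \<notin> D"
      proof
        assume "v3 \<in> D"
        then obtain v where v: "v \<in> R" "v3 \<in> subtree V E r v - {v}" unfolding D_def by blast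
        have vV: "v \<in> V" using F1 v by blast
        obtain q where q: "path_betw E v1 v2 q" "v3 \<in> set q" using v3 unfolding on_path_def by blast
        obtain q1 q2 where qs: "q = q1 @ v3 # q2" using q(2) by (meson split_list)
        have n1: "v1 \<notin> subtree V E r v - {v}" and n2: "v2 \<notin> subtree V E r v - {v}"
          using False F2 v D_def by blast+
        have pq: "is_path E (v3 # q2)" using q qs path_suffix[of E q1 v3 q2] unfolding path_betw_def by simp
        have "last (v3 # q2) = v2" using q qs unfolding path_betw_def by simp
        then have "v \<in> set (v3 # q2)" using T.sep[OF vV pq] v n2 by simp
        then have i2: "v \<in> set q2" using v by auto
        have "is_path E (q1 @ [v3])" using q qs path_prefix[of E q1 v3 q2] unfolding path_betw_def by simp
        then have pr: "is_path E (v3 # rev q1)" using path_rev[OF T.sy] by fastforce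
        have "last (v3 # rev q1) = v1" using q qs unfolding path_betw_def
          by (cases q1) (auto simp: last_rev)
        then have "v \<in> set (v3 # rev q1)" using T.sep[OF vV pr] v n1 by simp
        then have i1: "v \<in> set q1" using v by auto
        have "distinct q" using q unfolding path_betw_def is_path_def by blast
        then show False using qs i1 i2 by auto
      qed
      then have "igreater (g v3) (g v1) \<and> igreater (g v3) (g v2)"
        using v3 F2 False g_def ig_shift_both by simp
      then show ?thesis using v3 by blast
    qed
  qed
  have part3: "igreater (g u) (g x)"
    if "layer_comp V E w L''" "is_root E r L'' u" "x \<in> subtree V E r u - {u}" for L'' u x
  proof -
    have fx: "igreater (fopt u) (fopt x)" using STR that by blast
    show ?thesis
    proof (cases "u \<in> D")
      case True
      then have "x \<in> D" using F2 that by blast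
      then show ?thesis using True fx g_def by simp
    next
      case False
      then show ?thesis using fx g_def ig_shift_left ig_shift_both by (cases "x \<in> D") auto
    qed
  qed
  have "structured_ext V E r w g"
    unfolding structured_ext_def ext_strategy_def using part1 part2 part3 by blast
  then show ?thesis using lam by simp
qed

end
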